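(* Let $y_{\min}>0$ and suppose $0\le v\le y_{\min}\sum_{i=1}^{n^-}h^-_i$. Then there exist integers $\ell_1,\ell_2$ with $0\le\ell_1<\ell_2\le n^-$ such that, setting $Y:=\dfrac{v-y_{\min}\sum_{i=1}^{\ell_1}h^-_i}{\sum_{i=\ell_1+1}^{\ell_2}h^-_i}$, one has $0\le Y\le y_{\min}$ and the vector $y$ with $y_i=y_{\min}$ for $1\le i\le\ell_1$, $y_i=Y$ for $\ell_1+1\le i\le\ell_2$, and $y_i=0$ for $\ell_2+1\le i\le n^-$ is an optimal solution of $$\min_{y\in\mathbb{R}^{n^-}}\ -\sum_{i=1}^{n^-}\left(\frac{y_i}{\lambda}\right)^{1/\beta}\quad\text{s.t.}\quad y_{\min}\ge y_1\ge\cdots\ge y_{n^-}\ge 0,\qquad\sum_{i=1}^{n^-}h^-_iy_i=v.$$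
   Context: Fix $N\in\mathbb{N}$, $\beta\in(0,1)$, $\lambda>0$, and an integer $1\le n^-\le N$. A function $f:[0,1]\to\mathbb{R}$ is inverse S-shaped if it is strictly increasing, continuously differentiable, and there is $x_0\in[0,1]$ such that $f'$ is strictly decreasing on $[0,x_0]$ and strictly increasing on $[x_0,1]$. Let $W^-:[0,1]\to[0,1]$ be inverse S-shaped with $W^-(0)=0$, $W^-(1)=1$, and $h^-_i:=W^-\!\left(\frac{i}{N}\right)-W^-\!\left(\frac{i-1}{N}\right)$ for $i=1,\dots,n^-$. *)

theory Defs
  imports "HOL-Analysis.Analysis"
begin

definition inverse_S_shaped :: "(real \<Rightarrow> real) \<Rightarrow> bool" where
  "inverse_S_shaped f \<longleftrightarrow>
     strict_mono_on {0..1} f \<and>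
     (\<exists>f'. (\<forall>x\<in>{0..1}. (f has_real_derivative f' x) (at x within {0..1})) \<and>
           continuous_on {0..1} f' \<and>
           (\<exists>x0\<in>{0..1}. strict_antimono_on {0..x0} f' \<and> strict_mono_on {x0..1} f'))"

definition hminus :: "(real \<Rightarrow> real) \<Rightarrow> nat \<Rightarrow> nat \<Rightarrow> real" where
  "hminus W N i = W (real i / real N) - W ((real i - 1) / real N)"

definition feasible ::
  "(nat \<Rightarrow> real) \<Rightarrow> nat \<Rightarrow> real \<Rightarrow> real \<Rightarrow> (nat \<Rightarrow> real) \<Rightarrow> bool" where
  "feasible h n ymin v y \<longleftrightarrow>
     ymin \<ge> y 1 \<and> (\<forall>i. 1 \<le> i \<and> i < n \<longrightarrow> y i \<ge> y (i + 1)) \<and> y n \<ge> 0 \<and>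
     (\<Sum>i=1..n. h i * y i) = v"

definition objective :: "nat \<Rightarrow> real \<Rightarrow> real \<Rightarrow> (nat \<Rightarrow> real) \<Rightarrow> real" where
  "objective n \<beta> lam y = - (\<Sum>i=1..n. (y i / lam) powr (1 / \<beta>))"

definition optimal ::
  "(nat \<Rightarrow> real) \<Rightarrow> nat \<Rightarrow> real \<Rightarrow> real \<Rightarrow> real \<Rightarrow> real \<Rightarrow> (nat \<Rightarrow> real) \<Rightarrow> bool" where
  "optimal h n ymin v \<beta> lam y \<longleftrightarrow>
     feasible h n ymin v y \<and>
     (\<forall>z. feasible h n ymin v z \<longrightarrow> objective n \<beta> lam y \<le> objective n \<beta> lam z)"

end

theory Submission
  imports Defs
begin
lemma powr_convex0:
  fixes p :: real assumes "p \<ge> 1"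
  shows "convex_on {0..} (\<lambda>x::real. x powr p)"
proof (rule convex_onI)
  fix t x y :: real assume t: "0 < t" "t < 1" and xy: "x \<in> {0..}" "y \<in> {0..}"
  have key: "(a * b) powr p \<le> a * b powr p" if "0 \<le> a" "a \<le> 1" "0 \<le> b" for a b :: real
  proof -
    have "(a * b) powr p = a powr p * b powr p" using that by (simp add: powr_mult)
    also have "a powr p * b powr p \<le> a * b powr p"
    proof (cases "a = 0")
      case False
      hence "0 < a" using that by simp
      hence "a powr p \<le> a" using powr_le_one_le[of a p] that assms by simp
      thus ?thesis by (simp add: mult_right_mono)
    qed (use assms in simp)
    finally show ?thesis .
  qed
  show "((1 - t) *\<^sub>R x + t *\<^sub>R y) powr p \<le> (1 - t) * x powr p + t * y powr p"
  proof (cases "x = 0 \<or> y = 0")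
    case True
    then show ?thesis
    proof
      assume "x = 0" thus ?thesis using key[of t y] t xy assms by auto
    next
      assume "y = 0" thus ?thesis using key[of "1-t" x] t xy assms by auto
    qed
  next
    case False
    hence "x \<in> {0<..}" "y \<in> {0<..}" using xy by auto
    thus ?thesis using convex_onD[OF powr_convex[OF assms], of t x y] t by auto
  qed
qed simp

lemma phi_convex:
  fixes p lam :: real assumes "p \<ge> 1" "lam > 0"
  shows "convex_on {0..} (\<lambda>x::real. (x / lam) powr p)"
proof (rule convex_onI)
  fix t x y :: real assume t: "0 < t" "t < 1" and xy: "x \<in> {0..}" "y \<in> {0..}"
  have "((1 - t) *\<^sub>R x + t *\<^sub>R y) / lam = (1 - t) *\<^sub>R (x/lam) + t *\<^sub>R (y/lam)"
    using assms by (simp add: field_simps)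
  moreover have "x / lam \<in> {0..}" "y / lam \<in> {0..}" using xy assms by auto
  ultimately show "(((1 - t) *\<^sub>R x + t *\<^sub>R y) / lam) powr p \<le> (1 - t) * (x/lam) powr p + t * (y/lam) powr p"
    using convex_onD[OF powr_convex0[OF assms(1)], of t "x/lam" "y/lam"] t by simp
qed simp

lemma jensen_sum:
  fixes J :: "'j set" and I :: "nat set" and \<phi> :: "real \<Rightarrow> real"
  assumes cv: "convex_on {0..} \<phi>" and fJ: "finite J" "J \<noteq> {}" and fI: "finite I"
    and mu0: "\<And>j. j \<in> J \<Longrightarrow> mu j \<ge> 0" and mu1: "(\<Sum>j\<in>J. mu j) = 1"
    and qnn: "\<And>j i. j \<in> J \<Longrightarrow> i \<in> I \<Longrightarrow> q j i \<ge> 0"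
    and qM: "\<And>j. j \<in> J \<Longrightarrow> (\<Sum>i\<in>I. \<phi> (q j i)) \<le> M"
    and zq: "\<And>i. i \<in> I \<Longrightarrow> z i = (\<Sum>j\<in>J. mu j * q j i)"
  shows "(\<Sum>i\<in>I. \<phi> (z i)) \<le> M"
proof -
  have "(\<Sum>i\<in>I. \<phi> (z i)) \<le> (\<Sum>i\<in>I. \<Sum>j\<in>J. mu j * \<phi> (q j i))"
  proof (rule sum_mono)
    fix i assume i: "i \<in> I"
    have "\<phi> (\<Sum>j\<in>J. mu j *\<^sub>R q j i) \<le> (\<Sum>j\<in>J. mu j * \<phi> (q j i))"
      by (rule convex_on_sum[OF fJ cv mu1]) (use mu0 qnn i in auto)
    thus "\<phi> (z i) \<le> (\<Sum>j\<in>J. mu j * \<phi> (q j i))" using zq[OF i] by simp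
  qed
  also have "\<dots> = (\<Sum>j\<in>J. mu j * (\<Sum>i\<in>I. \<phi> (q j i)))"
    by (subst sum.swap) (simp add: sum_distrib_left)
  also have "\<dots> \<le> (\<Sum>j\<in>J. mu j * M)"
    by (rule sum_mono) (use mu0 qM in \<open>auto intro: mult_left_mono\<close>)
  also have "\<dots> = M" using mu1 by (simp add: sum_distrib_right[symmetric])
  finally show ?thesis .
qed

lemma sum_split_ivl:
  fixes h :: "nat \<Rightarrow> real"
  assumes "a \<le> b"
  shows "(\<Sum>i=1..b. h i) = (\<Sum>i=1..a. h i) + (\<Sum>i=a+1..b. h i)"
  using assms
proof (induction b)
  case 0 then show ?case by simp
next
  case (Suc b)
  show ?case
  proof (cases "a = Suc b")
    case True then show ?thesis by simp
  next
    case False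
    hence "a \<le> b" using Suc by simp
    then show ?thesis using Suc by (simp add: sum.cl_ivl_Suc)
  qed
qed

locale pctx =
  fixes h :: "nat \<Rightarrow> real" and n :: nat and ymin v :: real and \<phi> :: "real \<Rightarrow> real"
  assumes hpos: "\<And>i. 1 \<le> i \<Longrightarrow> i \<le> n \<Longrightarrow> h i > 0"
    and n1: "1 \<le> n" and ymin: "ymin > 0" and v0: "0 \<le> v"
    and vle: "v \<le> ymin * (\<Sum>i=1..n. h i)"
    and cv: "convex_on {0..} \<phi>"
begin

definition H :: "nat \<Rightarrow> real" where "H k = (\<Sum>i=1..k. h i)"
definition c :: "nat \<Rightarrow> real" where "c k = ymin * H k"
definition D :: "nat \<Rightarrow> nat \<Rightarrow> real" where "D a b = (\<Sum>i=a+1..b. h i)"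
definition Y :: "nat \<Rightarrow> nat \<Rightarrow> real" where
  "Y a b = (v - ymin * (\<Sum>i=1..a. h i)) / (\<Sum>i=a+1..b. h i)"
definition cand :: "nat \<Rightarrow> nat \<Rightarrow> nat \<Rightarrow> real" where
  "cand a b = (\<lambda>i. if 1 \<le> i \<and> i \<le> a then ymin else if a + 1 \<le> i \<and> i \<le> b then Y a b else 0)"
definition e :: "nat \<Rightarrow> nat \<Rightarrow> real" where "e k i = (if i \<le> k then ymin else 0)"
definition Obj :: "(nat \<Rightarrow> real) \<Rightarrow> real" where "Obj y = (\<Sum>i=1..n. \<phi> (y i))"
definition P :: "(nat \<times> nat) set" where
  "P = {(a, b). a < b \<and> b \<le> n \<and> c a \<le> v \<and> v \<le> c b}"

lemma H_split: "a \<le> b \<Longrightarrow> H b = H a + D a b"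
  unfolding H_def D_def by (rule sum_split_ivl)

lemma D_pos: "a < b \<Longrightarrow> b \<le> n \<Longrightarrow> D a b > 0"
  unfolding D_def by (rule sum_pos) (use hpos in auto)

lemma c_mono: "a \<le> b \<Longrightarrow> b \<le> n \<Longrightarrow> c a \<le> c b"
proof -
  assume ab: "a \<le> b" "b \<le> n"
  show ?thesis
  proof (cases "a = b")
    case False
    hence "D a b > 0" using D_pos ab by simp
    thus ?thesis using H_split[OF ab(1)] ymin unfolding c_def by simp
  qed simp
qed

lemma c_strict: "a < b \<Longrightarrow> b \<le> n \<Longrightarrow> c a < c b"
  using D_pos H_split[of a b] ymin unfolding c_def by simp

lemma c_less_imp: "a \<le> n \<Longrightarrow> b \<le> n \<Longrightarrow> c a < c b \<Longrightarrow> a < b"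
  using c_mono[of b a] by force

lemma c0: "c 0 = 0" unfolding c_def H_def by simp
lemma cn: "v \<le> c n" using vle unfolding c_def H_def by simp

lemma Y_eq: "Y a b = (v - c a) / D a b" unfolding Y_def c_def H_def D_def by simp

lemma Y_bounds: assumes "(a, b) \<in> P" shows "0 \<le> Y a b" "Y a b \<le> ymin"
proof -
  have ab: "a < b" "b \<le> n" "c a \<le> v" "v \<le> c b" using assms unfolding P_def by auto
  have Dp: "D a b > 0" using D_pos ab by simp
  show "0 \<le> Y a b" unfolding Y_eq using ab Dp by simp
  have "c b = c a + ymin * D a b" using H_split[of a b] ab unfolding c_def by (simp add: algebra_simps)
  thus "Y a b \<le> ymin" unfolding Y_eq using ab Dp by (simp add: divide_le_eq)
qed

lemma c_eq: assumes "k \<le> n" shows "(\<Sum>i=1..n. h i * e k i) = c k"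
proof -
  have "(\<Sum>i=1..n. h i * e k i) = (\<Sum>i\<in>{1..n}. if i \<le> k then ymin * h i else 0)"
    unfolding e_def by (rule sum.cong) auto
  also have "\<dots> = (\<Sum>i\<in>{i\<in>{1..n}. i \<le> k}. ymin * h i)" by (rule sum.inter_filter[symmetric]) simp
  also have "{i\<in>{1..n}. i \<le> k} = {1..k}" using assms by auto
  finally show ?thesis unfolding c_def H_def by (simp add: sum_distrib_left)
qed

lemma cand_comb:
  assumes "(a, b) \<in> P" and "1 \<le> i"
  shows "cand a b i = (c b - v) / (c b - c a) * e a i + (v - c a) / (c b - c a) * e b i"
proof -
  have ab: "a < b" "b \<le> n" "c a \<le> v" "v \<le> c b" using assms unfolding P_def by auto
  have Dp: "D a b > 0" using D_pos ab by simp
  have cb: "c b - c a = ymin * D a b" using H_split[of a b] ab unfolding c_def by (simp add: algebra_simps)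
  have cbp: "c b - c a > 0" using cb Dp ymin by simp
  consider "i \<le> a" | "a < i" "i \<le> b" | "b < i" by linarith
  then show ?thesis
  proof cases
    case 1
    have s1: "(c b - v) / (c b - c a) + (v - c a) / (c b - c a) = 1" using cbp by (simp add: add_divide_distrib[symmetric])
    have "cand a b i = ymin" "e a i = ymin" "e b i = ymin" using 1 assms(2) ab unfolding cand_def e_def by auto
    then show ?thesis using s1 by (metis distrib_right mult_1)
  next
    case 2
    have "(v - c a) / D a b = (v * ymin - ymin * c a) / (ymin * D a b)"
      using ymin Dp by (simp add: field_simps)
    then show ?thesis using 2 assms(2) ab cbp ymin unfolding cand_def e_def Y_eq cb by simp
  next
    case 3
    then show ?thesis using assms(2) ab unfolding cand_def e_def by simp
  qed
qed

lemma cand_bounds: assumes "(a, b) \<in> P" shows "0 \<le> cand a b i" "cand a b i \<le> ymin"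
  using Y_bounds[OF assms] ymin unfolding cand_def by auto

lemma cand_feasible: assumes "(a, b) \<in> P" shows "feasible h n ymin v (cand a b)"
proof -
  have ab: "a < b" "b \<le> n" "c a \<le> v" "v \<le> c b" using assms unfolding P_def by auto
  have cbp: "c b - c a > 0" using c_strict ab by simp
  have mono: "cand a b (i + 1) \<le> cand a b i" if "1 \<le> i" for i
    using Y_bounds[OF assms] ymin that unfolding cand_def by auto
  have "(\<Sum>i=1..n. h i * cand a b i) = (\<Sum>i=1..n. (c b - v) / (c b - c a) * (h i * e a i) + (v - c a) / (c b - c a) * (h i * e b i))"
    by (rule sum.cong) (use cand_comb[OF assms] in \<open>auto simp: algebra_simps\<close>)
  also have "\<dots> = (c b - v) / (c b - c a) * c a + (v - c a) / (c b - c a) * c b"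
    unfolding sum.distrib sum_distrib_left[symmetric] using c_eq[of a] c_eq[of b] ab by simp
  also have "\<dots> = ((c b - v) * c a + (v - c a) * c b) / (c b - c a)"
    by (simp add: add_divide_distrib)
  also have "(c b - v) * c a + (v - c a) * c b = v * (c b - c a)" by (simp add: algebra_simps)
  also have "v * (c b - c a) / (c b - c a) = v" using cbp by simp
  finally show ?thesis unfolding feasible_def using mono cand_bounds[OF assms] by auto
qed


lemma Obj_e_le:
  assumes "(x, y) \<in> P" "\<forall>q\<in>P. Obj (cand (fst q) (snd q)) \<le> M"
  shows "c x = v \<Longrightarrow> Obj (e x) \<le> M" and "c y = v \<Longrightarrow> Obj (e y) \<le> M"
proof -
  have xy: "x < y" "y \<le> n" using assms unfolding P_def by auto
  have cp: "c y - c x > 0" using c_strict xy by simp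
  have le: "Obj (cand x y) \<le> M" using assms by auto
  show "Obj (e x) \<le> M" if "c x = v"
  proof -
    have "Obj (e x) = Obj (cand x y)" unfolding Obj_def
      by (rule sum.cong) (use cand_comb[OF assms(1)] that cp in auto)
    thus ?thesis using le by simp
  qed
  show "Obj (e y) \<le> M" if "c y = v"
  proof -
    have "Obj (e y) = Obj (cand x y)" unfolding Obj_def
      by (rule sum.cong) (use cand_comb[OF assms(1)] that cp in auto)
    thus ?thesis using le by simp
  qed
qed

lemma main:
  "\<exists>a b. (a, b) \<in> P \<and> (\<forall>z. feasible h n ymin v z \<longrightarrow> Obj z \<le> Obj (cand a b))"
proof -
  have finP: "finite P"
    by (rule finite_subset[of _ "{0..n} \<times> {0..n}"]) (auto simp: P_def)
  have P0: "(0, n) \<in> P" using n1 c0 v0 cn unfolding P_def by auto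
  define f where "f q = Obj (cand (fst q) (snd q))" for q
  have "Max (f ` P) \<in> f ` P" using finP P0 by (intro Max_in) auto
  then obtain q where qP: "q \<in> P" and qM: "f q = Max (f ` P)" by auto
  obtain a b where q: "q = (a, b)" by (cases q)
  have best: "\<forall>q'\<in>P. Obj (cand (fst q') (snd q')) \<le> Obj (cand a b)"
    using qM q finP by (auto simp: f_def intro!: Max_ge)
  define M where "M = Obj (cand a b)"
  have PM: "Obj (cand x y) \<le> M" if "(x, y) \<in> P" for x y
    using best that unfolding M_def by force
  have bound: "Obj z \<le> M" if fz: "feasible h n ymin v z" for z
  proof -
    have z1: "z 1 \<le> ymin" and zmono: "\<And>i. 1 \<le> i \<Longrightarrow> i < n \<Longrightarrow> z (i + 1) \<le> z i"
      and zn: "0 \<le> z n" and zsum: "(\<Sum>i=1..n. h i * z i) = v"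
      using fz unfolding feasible_def by auto
    define zz where "zz k = (if k = 0 then ymin else if k \<le> n then z k else 0)" for k
    define d where "d k = zz k - zz (Suc k)" for k
    define w where "w k = d k / ymin" for k
    define K where "K = {0..n}"
    have dnn: "0 \<le> d k" if kn: "k \<le> n" for k
    proof -
      consider "k = 0" | "1 \<le> k" "k < n" | "k = n" "k \<noteq> 0" using kn by fastforce
      then show ?thesis
      proof cases
        case 1 then show ?thesis using z1 n1 unfolding d_def zz_def by auto
      next
        case 2 then show ?thesis using zmono[of k] unfolding d_def zz_def by auto
      next
        case 3 then show ?thesis using zn unfolding d_def zz_def by auto
      qed
    qed
    have tel: "(\<Sum>k=m..n. d k) = zz m - zz (Suc n)" if "m \<le> Suc n" for m
      using sum_Suc_diff[OF that, of "\<lambda>k. - zz k"] unfolding d_def by simp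
    have zrep: "z i = (\<Sum>k\<in>K. w k * e k i)" if i: "1 \<le> i" "i \<le> n" for i
    proof -
      have "(\<Sum>k\<in>K. w k * e k i) = (\<Sum>k\<in>K. if i \<le> k then d k else 0)"
        unfolding w_def e_def using ymin by (intro sum.cong) auto
      also have "\<dots> = (\<Sum>k\<in>{k\<in>K. i \<le> k}. d k)" by (rule sum.inter_filter[symmetric]) (simp add: K_def)
      also have "{k\<in>K. i \<le> k} = {i..n}" unfolding K_def by auto
      also have "(\<Sum>k=i..n. d k) = z i" using tel[of i] i unfolding zz_def by simp
      finally show ?thesis by simp
    qed
    have wnn: "0 \<le> w k" if "k \<in> K" for k using dnn[of k] that ymin unfolding w_def K_def by auto
    have wsum: "(\<Sum>k\<in>K. w k) = 1"
    proof -
      have "(\<Sum>k\<in>K. w k) = (\<Sum>k=0..n. d k) / ymin" unfolding w_def K_def by (simp add: sum_divide_distrib)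
      also have "(\<Sum>k=0..n. d k) = ymin" using tel[of 0] unfolding zz_def by simp
      finally show ?thesis using ymin by simp
    qed
    have wc: "(\<Sum>k\<in>K. w k * c k) = v"
    proof -
      have "(\<Sum>k\<in>K. w k * c k) = (\<Sum>k\<in>K. \<Sum>i=1..n. h i * (w k * e k i))"
      proof (rule sum.cong)
        fix k assume "k \<in> K"
        hence "c k = (\<Sum>i=1..n. h i * e k i)" using c_eq unfolding K_def by simp
        thus "w k * c k = (\<Sum>i=1..n. h i * (w k * e k i))"
          by (simp add: sum_distrib_left mult.left_commute)
      qed simp
      also have "\<dots> = (\<Sum>i=1..n. h i * (\<Sum>k\<in>K. w k * e k i))"
        by (subst sum.swap) (simp add: sum_distrib_left)
      also have "\<dots> = (\<Sum>i=1..n. h i * z i)" using zrep by (intro sum.cong) auto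
      finally show ?thesis using zsum by simp
    qed
    have wcv: "(\<Sum>k\<in>K. w k * (c k - v)) = 0"
    proof -
      have "(\<Sum>k\<in>K. w k * (c k - v)) = (\<Sum>k\<in>K. w k * c k) - v * (\<Sum>k\<in>K. w k)"
        by (simp add: algebra_simps sum_subtractf sum_distrib_left)
      thus ?thesis using wc wsum by simp
    qed
    define L where "L = {k\<in>K. c k \<le> v}"
    define G where "G = {k\<in>K. c k > v}"
    have finK: "finite K" "finite L" "finite G" unfolding K_def L_def G_def by auto
    have LGK: "L \<union> G = K" "L \<inter> G = {}" unfolding L_def G_def by auto
    define S where "S = (\<Sum>b\<in>G. w b * (c b - v))"
    have S0: "S \<ge> 0" unfolding S_def by (rule sum_nonneg) (use wnn in \<open>auto simp: G_def\<close>)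
    have SL: "(\<Sum>a\<in>L. w a * (v - c a)) = S"
    proof -
      have "(\<Sum>k\<in>L. w k * (c k - v)) + (\<Sum>k\<in>G. w k * (c k - v)) = 0"
        using wcv sum.union_disjoint[OF finK(2,3) LGK(2), of "\<lambda>k. w k * (c k - v)"] LGK(1) by simp
      thus ?thesis unfolding S_def by (simp add: algebra_simps sum_subtractf sum_negf)
    qed
    have LP: "(x, y) \<in> P" if "x \<in> L" "y \<in> G" for x y
      using that c_less_imp[of x y] unfolding L_def G_def K_def P_def by auto
    show ?thesis
    proof (cases "S = 0")
      case False
      hence Sp: "S > 0" using S0 by simp
      define mu where "mu q = w (fst q) * w (snd q) * (c (snd q) - c (fst q)) / S" for q
      define al where "al x y = (c y - v) / (c y - c x)" for x y
      have ident: "(\<Sum>q\<in>L \<times> G. mu q * (al (fst q) (snd q) * g (fst q) + (1 - al (fst q) (snd q)) * g (snd q)))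
                   = (\<Sum>k\<in>K. w k * g k)" for g :: "nat \<Rightarrow> real"
      proof -
        have pt: "mu (x, y) * (al x y * g x + (1 - al x y) * g y)
                  = (w x * g x) * (w y * (c y - v)) / S + (w y * g y) * (w x * (v - c x)) / S"
          if "x \<in> L" "y \<in> G" for x y
        proof -
          have "c y - c x > 0" using that unfolding L_def G_def by auto
          hence nz: "c y - c x \<noteq> 0" by simp
          have a1: "(c y - c x) * al x y = c y - v" using nz unfolding al_def by simp
          have a2: "(c y - c x) * (1 - al x y) = v - c x"
            using a1 by (simp add: right_diff_distrib)
          have "mu (x, y) * (al x y * g x + (1 - al x y) * g y)
                = (w x * w y / S) * (((c y - c x) * al x y) * g x + ((c y - c x) * (1 - al x y)) * g y)"
            using Sp unfolding mu_def by (simp add: field_simps)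
          also have "\<dots> = (w x * w y / S) * ((c y - v) * g x + (v - c x) * g y)" using a1 a2 by simp
          also have "\<dots> = (w x * g x) * (w y * (c y - v)) / S + (w y * g y) * (w x * (v - c x)) / S"
            using Sp by (simp add: field_simps)
          finally show ?thesis .
        qed
        have "(\<Sum>q\<in>L \<times> G. mu q * (al (fst q) (snd q) * g (fst q) + (1 - al (fst q) (snd q)) * g (snd q)))
              = (\<Sum>q\<in>L \<times> G. (w (fst q) * g (fst q)) * (w (snd q) * (c (snd q) - v)) / S)
              + (\<Sum>q\<in>L \<times> G. (w (snd q) * g (snd q)) * (w (fst q) * (v - c (fst q))) / S)"
          unfolding sum.distrib[symmetric] by (rule sum.cong) (auto simp: pt)
        also have "(\<Sum>q\<in>L \<times> G. (w (fst q) * g (fst q)) * (w (snd q) * (c (snd q) - v)) / S)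
                   = (\<Sum>x\<in>L. \<Sum>y\<in>G. (w x * g x) * (w y * (c y - v)) / S)"
          by (subst sum.cartesian_product) (simp add: case_prod_beta)
        also have "\<dots> = (\<Sum>x\<in>L. w x * g x)"
          using Sp by (simp add: sum_divide_distrib[symmetric] sum_distrib_left[symmetric] S_def)
        also have "(\<Sum>q\<in>L \<times> G. (w (snd q) * g (snd q)) * (w (fst q) * (v - c (fst q))) / S)
                   = (\<Sum>x\<in>L. \<Sum>y\<in>G. (w y * g y) * (w x * (v - c x)) / S)"
          by (subst sum.cartesian_product) (simp add: case_prod_beta)
        also have "\<dots> = (\<Sum>y\<in>G. \<Sum>x\<in>L. (w y * g y) * (w x * (v - c x)) / S)"
          by (rule sum.swap)
        also have "\<dots> = (\<Sum>y\<in>G. w y * g y)"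
          using Sp SL by (simp add: sum_divide_distrib[symmetric] sum_distrib_left[symmetric])
        also have "(\<Sum>x\<in>L. w x * g x) + (\<Sum>y\<in>G. w y * g y) = (\<Sum>k\<in>K. w k * g k)"
          using sum.union_disjoint[OF finK(2,3) LGK(2), of "\<lambda>k. w k * g k"] LGK(1) by simp
        finally show ?thesis .
      qed
      have mu0: "mu q \<ge> 0" if "q \<in> L \<times> G" for q
        using that wnn Sp unfolding mu_def L_def G_def by (auto intro!: divide_nonneg_pos mult_nonneg_nonneg)
      have mu1: "(\<Sum>q\<in>L \<times> G. mu q) = 1"
        using ident[of "\<lambda>_. 1"] wsum by simp
      have candal: "cand x y i = al x y * e x i + (1 - al x y) * e y i" if "x \<in> L" "y \<in> G" "1 \<le> i" for x y i
      proof -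
        have "c y - c x > 0" using that unfolding L_def G_def by auto
        hence "1 - al x y = (v - c x) / (c y - c x)" unfolding al_def by (simp add: field_simps)
        thus ?thesis using cand_comb[OF LP[OF that(1,2)] that(3)] unfolding al_def by simp
      qed
      have G_ne: "G \<noteq> {}" using Sp unfolding S_def by auto
      have L_ne: "L \<noteq> {}" using c0 v0 unfolding L_def K_def by auto
      show ?thesis unfolding Obj_def
      proof (rule jensen_sum[OF cv, where J = "L \<times> G" and mu = mu and q = "\<lambda>q. cand (fst q) (snd q)"])
        show "finite (L \<times> G)" using finK by simp
        show "L \<times> G \<noteq> {}" using G_ne L_ne by simp
        show "finite {1..n}" by simp
        show "\<And>j. j \<in> L \<times> G \<Longrightarrow> 0 \<le> mu j" by (rule mu0)
        show "(\<Sum>j\<in>L \<times> G. mu j) = 1" by (rule mu1)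
        show "\<And>j i. j \<in> L \<times> G \<Longrightarrow> i \<in> {1..n} \<Longrightarrow> 0 \<le> cand (fst j) (snd j) i"
          using cand_bounds LP by auto
        show "\<And>j. j \<in> L \<times> G \<Longrightarrow> (\<Sum>i=1..n. \<phi> (cand (fst j) (snd j) i)) \<le> M"
          using PM LP unfolding Obj_def by auto
        show "z i = (\<Sum>j\<in>L \<times> G. mu j * cand (fst j) (snd j) i)" if "i \<in> {1..n}" for i
        proof -
          have "(\<Sum>j\<in>L \<times> G. mu j * cand (fst j) (snd j) i)
                = (\<Sum>j\<in>L \<times> G. mu j * (al (fst j) (snd j) * e (fst j) i + (1 - al (fst j) (snd j)) * e (snd j) i))"
            using that by (intro sum.cong) (auto simp: candal)
          also have "\<dots> = (\<Sum>k\<in>K. w k * e k i)" by (rule ident)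
          finally show ?thesis using zrep that by simp
        qed
      qed
    next
      case True
      have wG: "w k = 0" if "k \<in> G" for k
      proof -
        have "\<forall>k\<in>G. w k * (c k - v) = 0"
          using True unfolding S_def
          by (subst sum_nonneg_eq_0_iff[symmetric]) (use finK wnn in \<open>auto simp: G_def\<close>)
        thus ?thesis using that unfolding G_def by auto
      qed
      have wL: "w k = 0" if "k \<in> L" "c k \<noteq> v" for k
      proof -
        have "\<forall>k\<in>L. w k * (v - c k) = 0"
          using True SL
          by (subst sum_nonneg_eq_0_iff[symmetric]) (use finK wnn in \<open>auto simp: L_def\<close>)
        thus ?thesis using that by auto
      qed
      define E where "E = {k\<in>K. c k = v}"
      have EK: "E \<subseteq> K" unfolding E_def by auto
      have w0: "w k = 0" if "k \<in> K - E" for k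
        using that wG wL LGK(1) unfolding E_def by blast
      have wE: "(\<Sum>k\<in>E. g k) = (\<Sum>k\<in>K. g k)" if "\<And>k. k \<in> K - E \<Longrightarrow> g k = 0" for g :: "nat \<Rightarrow> real"
        by (rule sum.mono_neutral_left) (use finK EK that in auto)
      have E1: "(\<Sum>k\<in>E. w k) = 1" using wE[of w] w0 wsum by simp
      have E_ne: "E \<noteq> {}" using E1 by auto
      have EM: "Obj (e k) \<le> M" if "k \<in> E" for k
      proof (cases "k < n")
        case True
        have "(k, Suc k) \<in> P" using True that c_mono[of k "Suc k"] unfolding E_def P_def by auto
        thus ?thesis using Obj_e_le(1)[of k "Suc k" M] best that unfolding E_def M_def by auto
      next
        case False
        hence kn: "k = n" using that unfolding E_def K_def by auto
        have "(n - 1, n) \<in> P" using kn n1 that c_mono[of "n - 1" n] unfolding E_def P_def by auto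
        thus ?thesis using Obj_e_le(2)[of "n - 1" n M] best that kn unfolding E_def M_def by auto
      qed
      show ?thesis unfolding Obj_def
      proof (rule jensen_sum[OF cv, where J = E and mu = w and q = e])
        show "finite E" using finK EK finite_subset by blast
        show "E \<noteq> {}" by (rule E_ne)
        show "finite {1..n}" by simp
        show "\<And>j. j \<in> E \<Longrightarrow> 0 \<le> w j" using wnn EK by auto
        show "(\<Sum>j\<in>E. w j) = 1" by (rule E1)
        show "\<And>j i. j \<in> E \<Longrightarrow> i \<in> {1..n} \<Longrightarrow> 0 \<le> e j i" using ymin unfolding e_def by auto
        show "\<And>j. j \<in> E \<Longrightarrow> (\<Sum>i=1..n. \<phi> (e j i)) \<le> M" using EM unfolding Obj_def by auto
        show "z i = (\<Sum>j\<in>E. w j * e j i)" if "i \<in> {1..n}" for i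
          using zrep[of i] that wE[of "\<lambda>k. w k * e k i"] w0 by simp
      qed
    qed
  qed
  show ?thesis using qP q bound unfolding M_def by blast
qed

end

theorem proposition3:
  fixes N nm :: nat and \<beta> lam ymin v :: real and W :: "real \<Rightarrow> real"
  assumes "N \<ge> 1" and "0 < \<beta>" and "\<beta> < 1" and "lam > 0"
    and "1 \<le> nm" and "nm \<le> N"
    and "inverse_S_shaped W" and "W 0 = 0" and "W 1 = 1"
    and "W ` {0..1} \<subseteq> {0..1}"
    and "ymin > 0"
    and "0 \<le> v" and "v \<le> ymin * (\<Sum>i=1..nm. hminus W N i)"
  shows "\<exists>l1 l2 :: nat. l1 < l2 \<and> l2 \<le> nm \<and>
     (let Y = (v - ymin * (\<Sum>i=1..l1. hminus W N i)) / (\<Sum>i=l1+1..l2. hminus W N i)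
      in 0 \<le> Y \<and> Y \<le> ymin \<and>
         optimal (hminus W N) nm ymin v \<beta> lam
           (\<lambda>i. if 1 \<le> i \<and> i \<le> l1 then ymin
                else if l1 + 1 \<le> i \<and> i \<le> l2 then Y else 0))"
proof -
  have sm: "strict_mono_on {0..1} W" using assms(7) unfolding inverse_S_shaped_def by blast
  have hpos: "hminus W N i > 0" if "1 \<le> i" "i \<le> nm" for i
  proof -
    have Np: "real N > 0" using assms(1) by simp
    have "(real i - 1) / real N \<in> {0..1}" "real i / real N \<in> {0..1}"
      using that assms(6) Np by (auto simp: field_simps)
    moreover have "(real i - 1) / real N < real i / real N" using Np by (simp add: divide_strict_right_mono)
    ultimately show ?thesis using sm unfolding hminus_def strict_mono_on_def by auto
  qed
  have p1: "1 / \<beta> \<ge> 1" using assms(2,3) by simp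
  interpret pctx "hminus W N" nm ymin v "\<lambda>x. (x / lam) powr (1 / \<beta>)"
    by unfold_locales (use hpos assms phi_convex[OF p1 assms(4)] in auto)
  obtain a b where abP: "(a, b) \<in> P" and bnd: "\<forall>z. feasible (hminus W N) nm ymin v z \<longrightarrow> Obj z \<le> Obj (cand a b)"
    using main by blast
  have ab: "a < b" "b \<le> nm" using abP unfolding P_def by auto
  have candeq: "cand a b = (\<lambda>i. if 1 \<le> i \<and> i \<le> a then ymin
                else if a + 1 \<le> i \<and> i \<le> b then (v - ymin * (\<Sum>i=1..a. hminus W N i)) / (\<Sum>i=a+1..b. hminus W N i) else 0)"
    unfolding cand_def Y_def by simp
  have obj: "objective nm \<beta> lam y = - Obj y" for y unfolding objective_def Obj_def by simp
  have opt: "optimal (hminus W N) nm ymin v \<beta> lam (cand a b)"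
    unfolding optimal_def obj using cand_feasible[OF abP] bnd by auto
  show ?thesis
    apply (rule exI[of _ a], rule exI[of _ b])
    using ab Y_bounds[OF abP] opt unfolding Let_def candeq Y_def by simp
qed
end
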